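(* Let $n\ge1$. There are constants $C>0$ and $\delta_0>0$ depending only on $n$ such that for every $0<\delta<\delta_0$: (a) a complex symmetric $n\times n$ matrix $B$ lies in $M_\delta^+$ if and only if $\langle Bx,x\rangle\in N_\delta^+$ for every nonzero $x\in\mathbb R^n$; (b) if $h\in E_\delta$ and $0\ne x\in\mathbb R^n$, then $h^Tx\in V_{C\delta}$; (c) if $z\in V_\delta$, $z\ne0$, then $\langle z,z\rangle\in N_{C\delta}^+$; (d) if $h\in E_\delta$, then $hh^T\in M_{C\delta}^+$; (e) if $A\in M_\delta$ and $|B-I|<\delta$, then $AB\in M_{C\delta}$ and $BA\in M_{C\delta}$; (f) if $A\in M_\delta$ and $B\in SO(n,\mathbb R)$, then $AB\in M_{C\delta}$ and $BA\in M_{C\delta}$.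
   Context: $\langle u,v\rangle=\sum_j u_jv_j$ (bilinear). $|\cdot|$ is the Euclidean norm on vectors and the operator norm on matrices. Writing $z=x+iy$ with $x,y$ real: $N_\delta^+=\{z\in\mathbb C:|y|<\delta x\}$; $V_\delta=\{z\in\mathbb C^n:|y|<\delta|x|\}$; $M_\delta=\{z\in{\rm Mat}(n,\mathbb C):|y|<\delta|x|\}$; $M_\delta^+=\{z\in{\rm Mat}(n,\mathbb C): z^T=z,\ \delta x+y \text{ and } \delta x-y \text{ positive definite}\}$. $E_\delta=\{gp: g\in{\rm Mat}(n,\mathbb R),\ \det g>0,\ p\in GL(n,\mathbb C),\ |p-I|<\delta\}$. The paper's convention is that writing "$w\in V_\delta$" in a conclusion means $w\in V_\epsilon$ with $\epsilon=O(\delta)$; this has been made explicit via the constant $C$. *)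

theory Defs
  imports "HOL-Analysis.Analysis"
begin

definition Rev :: "complex^'n \<Rightarrow> real^'n" where
  "Rev z = (\<chi> i. Re (z $ i))"

definition Imv :: "complex^'n \<Rightarrow> real^'n" where
  "Imv z = (\<chi> i. Im (z $ i))"

definition Rem :: "complex^'n^'m \<Rightarrow> real^'n^'m" where
  "Rem z = (\<chi> i j. Re (z $ i $ j))"

definition Imm :: "complex^'n^'m \<Rightarrow> real^'n^'m" where
  "Imm z = (\<chi> i j. Im (z $ i $ j))"

definition cvec :: "real^'n \<Rightarrow> complex^'n" where
  "cvec x = (\<chi> i. complex_of_real (x $ i))"

definition cmat :: "real^'n^'m \<Rightarrow> complex^'n^'m" where
  "cmat g = (\<chi> i j. complex_of_real (g $ i $ j))"

definition opnorm :: "'a::real_normed_field^'n^'m \<Rightarrow> real" where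
  "opnorm A = onorm (\<lambda>v. A *v v)"

definition bil :: "complex^'n \<Rightarrow> complex^'n \<Rightarrow> complex" where
  "bil u v = (\<Sum>j\<in>UNIV. u $ j * v $ j)"

definition pos_def :: "real^'n^'n \<Rightarrow> bool" where
  "pos_def A \<longleftrightarrow> (\<forall>v. v \<noteq> 0 \<longrightarrow> v \<bullet> (A *v v) > 0)"

definition Nplus :: "real \<Rightarrow> complex set" where
  "Nplus \<delta> = {z. \<bar>Im z\<bar> < \<delta> * Re z}"

definition Vd :: "real \<Rightarrow> (complex^'n) set" where
  "Vd \<delta> = {z. norm (Imv z) < \<delta> * norm (Rev z)}"

definition Md :: "real \<Rightarrow> (complex^'n^'n) set" where
  "Md \<delta> = {z. opnorm (Imm z) < \<delta> * opnorm (Rem z)}"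

definition Mplus :: "real \<Rightarrow> (complex^'n^'n) set" where
  "Mplus \<delta> = {z. transpose z = z \<and> pos_def (\<delta> *\<^sub>R Rem z + Imm z)
                             \<and> pos_def (\<delta> *\<^sub>R Rem z - Imm z)}"

definition Ed :: "real \<Rightarrow> (complex^'n^'n) set" where
  "Ed \<delta> = {cmat g ** p | g p. det g > 0 \<and> invertible p \<and> opnorm (p - mat 1) < \<delta>}"

end

theory Submission
  imports Defs
begin


lemma bl_mv: "bounded_linear (\<lambda>v. A *v v)" for A :: "'a::{euclidean_space,real_algebra_1}^'n^'m"
  by simp

lemma opnorm_mv: "norm (A *v v) \<le> opnorm A * norm v" for A :: "'a::{euclidean_space,real_algebra_1,real_normed_field}^'n^'m"
  unfolding opnorm_def by (rule onorm) simp

lemma opnorm_nonneg: "0 \<le> opnorm A" for A :: "'a::{euclidean_space,real_algebra_1,real_normed_field}^'n^'m"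
  unfolding opnorm_def by (rule onorm_pos_le) simp

lemma opnorm_le: "(\<And>v. norm (A *v v) \<le> K * norm v) \<Longrightarrow> opnorm A \<le> K" for A :: "'a::{euclidean_space,real_algebra_1,real_normed_field}^'n^'m"
  unfolding opnorm_def by (rule onorm_le) auto

lemma opnorm_mult: "opnorm (A ** B) \<le> opnorm A * opnorm B" for A :: "'a::{euclidean_space,real_algebra_1,real_normed_field}^'n^'m"
proof (rule opnorm_le)
  fix v
  have "norm ((A ** B) *v v) = norm (A *v (B *v v))" by (simp add: matrix_vector_mul_assoc)
  also have "\<dots> \<le> opnorm A * norm (B *v v)" by (rule opnorm_mv)
  also have "\<dots> \<le> opnorm A * (opnorm B * norm v)" by (rule mult_left_mono[OF opnorm_mv opnorm_nonneg])
  finally show "norm ((A ** B) *v v) \<le> opnorm A * opnorm B * norm v" by (simp add: mult.assoc)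
qed

lemma opnorm_add: "opnorm (A + B) \<le> opnorm A + opnorm B" for A :: "'a::{euclidean_space,real_algebra_1,real_normed_field}^'n^'m"
proof (rule opnorm_le)
  fix v
  have "norm ((A + B) *v v) = norm (A *v v + B *v v)" by (simp add: matrix_vector_mult_add_rdistrib)
  also have "\<dots> \<le> norm (A *v v) + norm (B *v v)" by (rule norm_triangle_ineq)
  also have "\<dots> \<le> opnorm A * norm v + opnorm B * norm v" by (intro add_mono opnorm_mv)
  finally show "norm ((A + B) *v v) \<le> (opnorm A + opnorm B) * norm v" by (simp add: algebra_simps)
qed

lemma opnorm_diff: "opnorm (A - B) \<le> opnorm A + opnorm B" for A :: "'a::{euclidean_space,real_algebra_1,real_normed_field}^'n^'m"
proof (rule opnorm_le)
  fix v
  have "norm ((A - B) *v v) = norm (A *v v - B *v v)" by (simp add: matrix_vector_mult_diff_rdistrib)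
  also have "\<dots> \<le> norm (A *v v) + norm (B *v v)" by (rule norm_triangle_ineq4)
  also have "\<dots> \<le> opnorm A * norm v + opnorm B * norm v" by (intro add_mono opnorm_mv)
  finally show "norm ((A - B) *v v) \<le> (opnorm A + opnorm B) * norm v" by (simp add: algebra_simps)
qed


lemma Rev_mv: "Rev (A *v cvec x) = Rem A *v x"
  by (simp add: Rev_def Rem_def cvec_def matrix_vector_mult_def vec_eq_iff Re_sum)
lemma Imv_mv: "Imv (A *v cvec x) = Imm A *v x"
  by (simp add: Imv_def Imm_def cvec_def matrix_vector_mult_def vec_eq_iff Im_sum)

lemma norm_cvec: "norm (cvec x) = norm x"
  by (simp add: norm_vec_def cvec_def L2_set_def)

lemma norm_sq_RI: "(norm z)^2 = (norm (Rev z))^2 + (norm (Imv z))^2"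
  by (simp add: norm_vec_def L2_set_def Rev_def Imv_def cmod_power2 sum.distrib sum_nonneg)

lemma norm_Rev: "norm (Rev z) \<le> norm z"
  by (metis norm_sq_RI le_add_same_cancel1 norm_ge_zero power2_le_imp_le zero_le_power2)
lemma norm_Imv: "norm (Imv z) \<le> norm z"
  by (metis norm_sq_RI le_add_same_cancel2 norm_ge_zero power2_le_imp_le zero_le_power2)

lemma opnorm_Rem: "opnorm (Rem E) \<le> opnorm E"
proof (rule opnorm_le)
  fix v
  have "norm (Rem E *v v) = norm (Rev (E *v cvec v))" by (simp add: Rev_mv)
  also have "\<dots> \<le> norm (E *v cvec v)" by (rule norm_Rev)
  also have "\<dots> \<le> opnorm E * norm v" using opnorm_mv[of E "cvec v"] by (simp add: norm_cvec)
  finally show "norm (Rem E *v v) \<le> opnorm E * norm v" .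
qed
lemma opnorm_Imm: "opnorm (Imm E) \<le> opnorm E"
proof (rule opnorm_le)
  fix v
  have "norm (Imm E *v v) = norm (Imv (E *v cvec v))" by (simp add: Imv_mv)
  also have "\<dots> \<le> norm (E *v cvec v)" by (rule norm_Imv)
  also have "\<dots> \<le> opnorm E * norm v" using opnorm_mv[of E "cvec v"] by (simp add: norm_cvec)
  finally show "norm (Imm E *v v) \<le> opnorm E * norm v" .
qed

lemma Rem_mult: "Rem (A ** B) = Rem A ** Rem B - Imm A ** Imm B"
  by (simp add: Rem_def Imm_def matrix_matrix_mult_def vec_eq_iff Re_sum sum_subtractf)
lemma Imm_mult: "Imm (A ** B) = Rem A ** Imm B + Imm A ** Rem B"
  by (simp add: Rem_def Imm_def matrix_matrix_mult_def vec_eq_iff Im_sum sum.distrib)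
lemma Rem_add: "Rem (A + B) = Rem A + Rem B" by (simp add: Rem_def vec_eq_iff)
lemma Imm_add: "Imm (A + B) = Imm A + Imm B" by (simp add: Imm_def vec_eq_iff)
lemma Rem_diff: "Rem (A - B) = Rem A - Rem B" by (simp add: Rem_def vec_eq_iff)
lemma Imm_diff: "Imm (A - B) = Imm A - Imm B" by (simp add: Imm_def vec_eq_iff)
lemma Rem_mat1: "Rem (mat 1) = mat 1" by (simp add: Rem_def mat_def vec_eq_iff)
lemma Imm_mat1: "Imm (mat 1) = 0" by (simp add: Imm_def mat_def vec_eq_iff)
lemma Rem_cmat: "Rem (cmat B) = B" by (simp add: Rem_def cmat_def vec_eq_iff)
lemma Imm_cmat: "Imm (cmat B) = 0" by (simp add: Imm_def cmat_def vec_eq_iff)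
lemma Rem_transpose: "Rem (transpose A) = transpose (Rem A)" by (simp add: Rem_def transpose_def vec_eq_iff)
lemma Imm_transpose: "Imm (transpose A) = transpose (Imm A)" by (simp add: Imm_def transpose_def vec_eq_iff)

lemma opnorm_transpose_real: "opnorm (transpose A) \<le> real CARD('n) * real CARD('n) * opnorm A" for A :: "real^'n^'n"
  unfolding opnorm_def
  by (rule onorm_le_matrix_component) (simp add: transpose_def matrix_component_le_onorm)


lemma Re_bil_cvec: "Re (bil u (cvec x)) = Rev u \<bullet> x"
  by (simp add: bil_def cvec_def Rev_def inner_vec_def Re_sum)
lemma Im_bil_cvec: "Im (bil u (cvec x)) = Imv u \<bullet> x"
  by (simp add: bil_def cvec_def Imv_def inner_vec_def Im_sum)
lemma Re_bil_self: "Re (bil z z) = Rev z \<bullet> Rev z - Imv z \<bullet> Imv z"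
  by (simp add: bil_def Rev_def Imv_def inner_vec_def Re_sum sum_subtractf power2_eq_square)
lemma Im_bil_self: "Im (bil z z) = 2 * (Rev z \<bullet> Imv z)"
  by (simp add: bil_def Rev_def Imv_def inner_vec_def Im_sum sum_distrib_left mult_ac)

lemma partA:
  fixes B :: "complex^'n^'n"
  assumes "transpose B = B"
  shows "B \<in> Mplus d \<longleftrightarrow> (\<forall>x. x \<noteq> 0 \<longrightarrow> bil (B *v cvec x) (cvec x) \<in> Nplus d)"
proof -
  have e1: "v \<bullet> ((d *\<^sub>R Rem B + Imm B) *v v) = d * (v \<bullet> (Rem B *v v)) + v \<bullet> (Imm B *v v)" for v
    by (simp add: matrix_vector_mult_add_rdistrib inner_add_right flip: scaleR_matrix_vector_assoc)
  have e2: "v \<bullet> ((d *\<^sub>R Rem B - Imm B) *v v) = d * (v \<bullet> (Rem B *v v)) - v \<bullet> (Imm B *v v)" for v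
    by (simp add: matrix_vector_mult_diff_rdistrib inner_diff_right flip: scaleR_matrix_vector_assoc)
  have e3: "bil (B *v cvec x) (cvec x) \<in> Nplus d \<longleftrightarrow> \<bar>x \<bullet> (Imm B *v x)\<bar> < d * (x \<bullet> (Rem B *v x))" for x
    by (simp add: Nplus_def Re_bil_cvec Im_bil_cvec Rev_mv Imv_mv inner_commute)
  show ?thesis
    unfolding Mplus_def pos_def_def using assms e1 e2 e3 by (auto simp: abs_less_iff)
qed

lemma Nplus_mono: "z \<in> Nplus d \<Longrightarrow> 0 < d \<Longrightarrow> d \<le> d' \<Longrightarrow> z \<in> Nplus d'"
  unfolding Nplus_def
proof -
  assume "z \<in> {z. \<bar>Im z\<bar> < d * Re z}" "0 < d" "d \<le> d'"
  then have a: "\<bar>Im z\<bar> < d * Re z" by simp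
  then have "0 < Re z" using \<open>0 < d\<close> by (smt (verit) zero_less_mult_iff)
  then have "d * Re z \<le> d' * Re z" using \<open>d \<le> d'\<close> by (simp add: mult_right_mono)
  then show "z \<in> {z. \<bar>Im z\<bar> < d' * Re z}" using a by simp
qed

lemma Vd_mono: "z \<in> Vd d \<Longrightarrow> d \<le> d' \<Longrightarrow> z \<in> Vd d'"
  unfolding Vd_def using mult_right_mono[of d d' "norm (Rev z)"] by auto
lemma Md_mono: "z \<in> Md d \<Longrightarrow> d \<le> d' \<Longrightarrow> z \<in> Md d'"
  unfolding Md_def using mult_right_mono[of d d' "opnorm (Rem z)"] opnorm_nonneg[of "Rem z"] by auto

lemma Mplus_mono: "z \<in> Mplus d \<Longrightarrow> 0 < d \<Longrightarrow> d \<le> d' \<Longrightarrow> z \<in> Mplus d'"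
proof -
  assume a: "z \<in> Mplus d" "0 < d" "d \<le> d'"
  then have t: "transpose z = z" by (simp add: Mplus_def)
  show ?thesis using a partA[OF t] Nplus_mono by metis
qed

lemma partC:
  fixes z :: "complex^'n"
  assumes "z \<in> Vd d" "d < 1/2" "0 < d"
  shows "bil z z \<in> Nplus (4 * d)"
proof -
  define x where "x = norm (Rev z)"
  define y where "y = norm (Imv z)"
  have y: "y < d * x" using assms(1) by (simp add: Vd_def x_def y_def)
  have y0: "0 \<le> y" by (simp add: y_def)
  have "0 < d * x" using y y0 by linarith
  then have x0: "0 < x" using assms(3) by (simp add: zero_less_mult_iff)
  have im: "\<bar>Im (bil z z)\<bar> \<le> 2 * x * y"
    using Cauchy_Schwarz_ineq2[of "Rev z" "Imv z"] by (simp add: Im_bil_self x_def y_def abs_mult)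
  have re: "Re (bil z z) = x^2 - y^2"
    by (simp add: Re_bil_self x_def y_def power2_norm_eq_inner)
  have "y^2 \<le> (d*x)^2" using y y0 by (intro power_mono) auto
  moreover have "d * d \<le> (1/2) * (1/2)" using assms(2,3) by (intro mult_mono) auto
  then have "d^2 * x^2 \<le> (1/4) * x^2" by (intro mult_right_mono) (auto simp: power2_eq_square)
  ultimately have yy: "y^2 \<le> x^2 / 4" by (simp add: power_mult_distrib)
  have "x * y < x * (d * x)" using y x0 by simp
  then have "\<bar>Im (bil z z)\<bar> < 2 * d * x^2" using im by (simp add: power2_eq_square algebra_simps)
  also have "\<dots> \<le> 4 * d * (x^2 - y^2)"
  proof -
    have a: "4 * y^2 \<le> x^2" using yy by simp
    have b: "0 \<le> y^2" by simp
    have "2 * x^2 \<le> 4 * (x^2 - y^2)" using a b zero_le_power2[of x] by (subst right_diff_distrib) linarith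
    then have "d * (2 * x^2) \<le> d * (4 * (x^2 - y^2))" using assms(3) by (intro mult_left_mono) auto
    then show ?thesis by (simp add: algebra_simps)
  qed
  finally show ?thesis by (simp add: Nplus_def re)
qed




lemma matrix_add_rdistrib': "((B + C) ** A) = (B ** A) + (C ** A)" for A :: "'a::semiring_1^'p^'n"
  by (vector matrix_matrix_mult_def sum.distrib[symmetric] field_simps)

lemma opnorm_lower: "opnorm A - opnorm P - opnorm Q \<le> opnorm (A + P - Q)"
  for A :: "real^'n^'m"
proof -
  have "A = (A + P - Q) + (Q - P)" by simp
  then have "opnorm A \<le> opnorm (A + P - Q) + opnorm (Q - P)" by (metis opnorm_add)
  moreover have "opnorm (Q - P) \<le> opnorm Q + opnorm P" by (rule opnorm_diff)
  ultimately show ?thesis by linarith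
qed

lemma opnorm_upper: "opnorm (A + P + Q) \<le> opnorm A + opnorm P + opnorm Q"
  for A :: "real^'n^'m"
  by (meson add_right_mono opnorm_add order_trans)

lemma opnorm_mult_le: "opnorm X \<le> u \<Longrightarrow> opnorm Y \<le> v \<Longrightarrow> opnorm (X ** Y) \<le> u * v"
  for X :: "real^'n^'m" and Y :: "real^'p^'n"
  by (meson mult_mono opnorm_mult opnorm_nonneg order_trans)

lemma num:
  fixes a b d e X Y :: real
  assumes "0 \<le> b" "b < d*a" "0 \<le> e" "e < d" "0 < d" "d < 1/4"
    "a - a*e - b*e \<le> X" "Y \<le> b + a*e + b*e"
  shows "Y < 6*d*X"
proof -
  have "0 < d*a" using assms(1,2) by linarith
  then have a0: "0 < a" using assms(5) by (simp add: zero_less_mult_iff)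
  have "b*e \<le> b*d" using assms by (intro mult_left_mono) auto
  also have "\<dots> \<le> (d*a)*d" using assms by (intro mult_right_mono) auto
  finally have be: "b*e \<le> d*d*a" by (simp add: mult_ac)
  have ae: "a*e \<le> a*d" using assms a0 by (intro mult_left_mono) auto
  have dd: "d*d*a \<le> (1/4)*d*a"
  proof -
    have h: "d*d \<le> (1/4)*d" using assms by (intro mult_right_mono) auto
    then show ?thesis using mult_right_mono[OF h, of a] a0 by simp
  qed
  have "Y < d*a + a*d + d*d*a" using assms(2,8) be ae by linarith
  also have "\<dots> \<le> 3 * (d*a)" using dd assms(5) a0 by (simp add: algebra_simps)
  finally have Y: "Y < 3*(d*a)" .
  have ad: "a*d \<le> a*(1/4)" using assms a0 by (intro mult_left_mono) auto
  have dd': "d*d*a \<le> (1/4)*(a*d)" using dd by (simp add: mult_ac)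
  have ad': "a*d \<le> a/4" using ad by simp
  have X: "a/2 \<le> X" using assms(7) be ae dd' ad' a0 by linarith
  have "3*(d*a) = 6*d*(a/2)" by simp
  also have "\<dots> \<le> 6*d*X" using X assms(5) by (intro mult_left_mono) auto
  finally show ?thesis using Y by linarith
qed

lemma partE:
  fixes A B :: "complex^'n^'n"
  assumes A: "A \<in> Md d" and B: "opnorm (B - mat 1) < d" and d: "d < 1/4" "0 < d"
  shows "A ** B \<in> Md (6*d) \<and> B ** A \<in> Md (6*d)"
proof -
  define E where "E = B - mat 1"
  define a where "a = opnorm (Rem A)"
  define b where "b = opnorm (Imm A)"
  define e where "e = opnorm E"
  have ab: "b < d * a" using A by (simp add: Md_def a_def b_def)
  have b0: "0 \<le> b" "0 \<le> a" "0 \<le> e" by (simp_all add: a_def b_def e_def opnorm_nonneg)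
  have ed: "e < d" using B by (simp add: e_def E_def)
  have RB: "Rem B = mat 1 + Rem E" by (simp add: E_def Rem_diff Rem_mat1)
  have IB: "Imm B = Imm E" by (simp add: E_def Imm_diff Imm_mat1)
  have r: "opnorm (Rem E) \<le> e" "opnorm (Imm E) \<le> e" by (simp_all add: e_def opnorm_Rem opnorm_Imm)
  have p1: "opnorm (Rem A ** Rem E) \<le> a * e" "opnorm (Rem A ** Imm E) \<le> a * e"
    "opnorm (Imm A ** Rem E) \<le> b * e" "opnorm (Imm A ** Imm E) \<le> b * e"
    by (rule opnorm_mult_le; simp add: a_def b_def r)+
  have p2: "opnorm (Rem E ** Rem A) \<le> e * a" "opnorm (Imm E ** Rem A) \<le> e * a"
    "opnorm (Rem E ** Imm A) \<le> e * b" "opnorm (Imm E ** Imm A) \<le> e * b"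
    by (rule opnorm_mult_le; simp add: a_def b_def r)+
  note p2 = p2[unfolded mult.commute[of e]]
  have R1: "Rem (A ** B) = Rem A + Rem A ** Rem E - Imm A ** Imm E"
    by (simp add: Rem_mult RB IB matrix_add_ldistrib)
  have I1: "Imm (A ** B) = Imm A + Rem A ** Imm E + Imm A ** Rem E"
    by (simp add: Imm_mult RB IB matrix_add_ldistrib algebra_simps)
  have R2: "Rem (B ** A) = Rem A + Rem E ** Rem A - Imm E ** Imm A"
    by (simp add: Rem_mult RB IB matrix_add_rdistrib')
  have I2: "Imm (B ** A) = Imm A + Rem E ** Imm A + Imm E ** Rem A"
    by (simp add: Imm_mult RB IB matrix_add_rdistrib' algebra_simps)
  have X1: "a - a*e - b*e \<le> opnorm (Rem (A ** B))"
    using opnorm_lower[of "Rem A" "Rem A ** Rem E" "Imm A ** Imm E"] p1 unfolding R1 a_def by linarith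
  have Y1: "opnorm (Imm (A ** B)) \<le> b + a*e + b*e"
    using opnorm_upper[of "Imm A" "Rem A ** Imm E" "Imm A ** Rem E"] p1 unfolding I1 b_def by linarith
  have X2: "a - a*e - b*e \<le> opnorm (Rem (B ** A))"
    using opnorm_lower[of "Rem A" "Rem E ** Rem A" "Imm E ** Imm A"] p2 unfolding R2 a_def by linarith
  have Y2: "opnorm (Imm (B ** A)) \<le> b + a*e + b*e"
    using opnorm_upper[of "Imm A" "Rem E ** Imm A" "Imm E ** Rem A"] p2 unfolding I2 b_def by linarith
  show ?thesis unfolding Md_def
    using num[OF b0(1) ab b0(3) ed d(2) d(1) X1 Y1] num[OF b0(1) ab b0(3) ed d(2) d(1) X2 Y2] by simp
qed

lemma opnorm_orth_le: "orthogonal_matrix B \<Longrightarrow> opnorm B \<le> 1" for B :: "real^'n^'n"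
proof (rule opnorm_le)
  fix v assume "orthogonal_matrix B"
  then have "orthogonal_transformation ((*v) B)"
    by (simp add: orthogonal_transformation_matrix)
  then show "norm (B *v v) \<le> 1 * norm v" by (simp add: orthogonal_transformation_norm)
qed

lemma opnorm_orth_right: "orthogonal_matrix B \<Longrightarrow> opnorm (M ** B) = opnorm M" for B :: "real^'n^'n" and M :: "real^'n^'m"
proof -
  assume o: "orthogonal_matrix B"
  have "opnorm (M ** B) \<le> opnorm M * opnorm B" by (rule opnorm_mult)
  also have "\<dots> \<le> opnorm M" using opnorm_orth_le[OF o] opnorm_nonneg[of M] by (simp add: mult_left_le)
  finally have 1: "opnorm (M ** B) \<le> opnorm M" .
  have "B ** transpose B = mat 1" using o by (simp add: orthogonal_matrix_def)
  then have "M = (M ** B) ** transpose B" by (metis matrix_mul_assoc matrix_mul_rid)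
  then have "opnorm M \<le> opnorm (M ** B) * opnorm (transpose B)" by (metis opnorm_mult)
  also have "\<dots> \<le> opnorm (M ** B)" using opnorm_orth_le[of "transpose B"] o opnorm_nonneg[of "M ** B"] by (simp add: mult_left_le)
  finally show ?thesis using 1 by simp
qed

lemma opnorm_orth_left: "orthogonal_matrix B \<Longrightarrow> opnorm (B ** M) = opnorm M" for B :: "real^'n^'n" and M :: "real^'m^'n"
proof -
  assume o: "orthogonal_matrix B"
  have "opnorm (B ** M) \<le> opnorm B * opnorm M" by (rule opnorm_mult)
  also have "\<dots> \<le> opnorm M" using mult_right_mono[OF opnorm_orth_le[OF o] opnorm_nonneg[of M]] by simp
  finally have 1: "opnorm (B ** M) \<le> opnorm M" .
  have "transpose B ** B = mat 1" using o by (simp add: orthogonal_matrix_def)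
  then have "M = transpose B ** (B ** M)" by (metis matrix_mul_assoc matrix_mul_lid)
  then have "opnorm M \<le> opnorm (transpose B) * opnorm (B ** M)" by (metis opnorm_mult)
  also have "\<dots> \<le> opnorm (B ** M)" using mult_right_mono[OF opnorm_orth_le[of "transpose B"] opnorm_nonneg[of "B ** M"]] o by simp
  finally show ?thesis using 1 by simp
qed

lemma partF:
  fixes A :: "complex^'n^'n" and B :: "real^'n^'n"
  assumes A: "A \<in> Md d" and o: "orthogonal_matrix B"
  shows "A ** cmat B \<in> Md d \<and> cmat B ** A \<in> Md d"
  using A unfolding Md_def
  by (simp add: Rem_mult Imm_mult Rem_cmat Imm_cmat opnorm_orth_right[OF o] opnorm_orth_left[OF o])



lemma transpose_diff': "transpose (A - B) = transpose A - transpose B"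
  by (simp add: transpose_def vec_eq_iff)

lemma cmat_mv: "cmat A *v cvec x = cvec (A *v x)"
  by (simp add: cmat_def cvec_def matrix_vector_mult_def vec_eq_iff)
lemma transpose_cmat: "transpose (cmat A) = cmat (transpose A)"
  by (simp add: cmat_def transpose_def vec_eq_iff)

lemma Rev_zero: "Rev 0 = 0" by (simp add: Rev_def vec_eq_iff)

lemma partB:
  fixes h :: "complex^'n^'n"
  assumes h: "h \<in> Ed d" and x: "x \<noteq> 0" and Kd: "real CARD('n) * real CARD('n) * d < 1/2" and d: "0 < d"
  shows "transpose h *v cvec x \<in> Vd (2 * (real CARD('n) * real CARD('n)) * d)"
proof -
  define K where "K = real CARD('n) * real CARD('n)"
  have K0: "0 < K" by (simp add: K_def)
  obtain g p where hgp: "h = cmat g ** p" "det g > 0" "opnorm (p - mat 1) < d"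
    using h unfolding Ed_def by blast
  define y where "y = transpose g *v x"
  have "invertible (transpose g)" using hgp(2) by (simp add: invertible_det_nz)
  then obtain N where N: "N ** transpose g = mat 1" by (auto simp: invertible_def)
  have y0: "y \<noteq> 0"
  proof
    assume "y = 0"
    then have "N *v (transpose g *v x) = 0" by (simp add: y_def del: transpose_matrix_vector)
    then have "(N ** transpose g) *v x = 0" by (simp add: matrix_vector_mul_assoc del: transpose_matrix_vector)
    then show False using N x by simp
  qed
  define w where "w = transpose h *v cvec x"
  have w: "w = transpose p *v cvec y"
    unfolding w_def y_def hgp(1)
    by (simp add: matrix_transpose_mul transpose_cmat cmat_mv matrix_vector_mul_assoc[symmetric] del: transpose_matrix_vector)
  define E where "E = p - mat 1"
  have RE: "transpose (Rem E) = transpose (Rem p) - mat 1"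
    by (simp add: E_def Rem_diff Rem_mat1 transpose_diff')
  have IE: "transpose (Imm E) = transpose (Imm p)"
    by (simp add: E_def Imm_diff Imm_mat1)
  have Rw: "Rev w = y + transpose (Rem E) *v y"
    unfolding w Rev_mv Rem_transpose RE
    by (simp add: matrix_vector_mult_diff_rdistrib del: transpose_matrix_vector)
  have Iw: "Imv w = transpose (Imm E) *v y"
    unfolding w Imv_mv Imm_transpose IE by simp
  define e where "e = opnorm E"
  have ed: "e < d" using hgp(3) by (simp add: e_def E_def)
  have e0: "0 \<le> e" by (simp add: e_def opnorm_nonneg)
  have tR: "opnorm (transpose (Rem E)) \<le> K * e"
    using opnorm_transpose_real[of "Rem E"] opnorm_Rem[of E] K0
    unfolding K_def e_def by (smt (verit) mult_left_mono)
  have tI: "opnorm (transpose (Imm E)) \<le> K * e"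
    using opnorm_transpose_real[of "Imm E"] opnorm_Imm[of E] K0
    unfolding K_def e_def by (smt (verit) mult_left_mono)
  define ny where "ny = norm y"
  have ny0: "0 < ny" using y0 by (simp add: ny_def)
  have Ked: "K * e * ny \<le> K * d * ny"
    using ed K0 ny0 by (intro mult_right_mono mult_left_mono) auto
  have "norm (Imv w) \<le> opnorm (transpose (Imm E)) * ny" unfolding Iw ny_def by (rule opnorm_mv)
  also have "\<dots> \<le> K * e * ny" using tI ny0 by (intro mult_right_mono) auto
  finally have I1: "norm (Imv w) \<le> K * e * ny" .
  have "norm (transpose (Rem E) *v y) \<le> opnorm (transpose (Rem E)) * ny" unfolding ny_def by (rule opnorm_mv)
  also have "\<dots> \<le> K * e * ny" using tR ny0 by (intro mult_right_mono) auto
  finally have R0: "norm (transpose (Rem E) *v y) \<le> K * e * ny" .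
  have "ny - norm (transpose (Rem E) *v y) \<le> norm (Rev w)"
    unfolding Rw ny_def by (metis norm_diff_ineq)
  then have R1: "ny - K * d * ny \<le> norm (Rev w)" using R0 Ked by linarith
  have Kdny: "K * d * ny \<le> ny / 2"
    using mult_right_mono[OF less_imp_le[OF Kd[folded K_def]], of ny] ny0 by simp
  have "K * e * ny < K * d * ny"
    using ed K0 ny0 by simp
  then have "norm (Imv w) < K * d * ny" using I1 by linarith
  also have "\<dots> \<le> 2 * K * d * (ny - K * d * ny)"
  proof -
    have "ny / 2 \<le> ny - K * d * ny" using Kdny by linarith
    then have "(2 * K * d) * (ny / 2) \<le> (2 * K * d) * (ny - K * d * ny)"
      using K0 d by (intro mult_left_mono) auto
    then show ?thesis by simp
  qed
  also have "\<dots> \<le> 2 * K * d * norm (Rev w)"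
    using R1 K0 d by (intro mult_left_mono) auto
  finally show ?thesis unfolding Vd_def w_def[symmetric] K_def by simp
qed


lemma bil_transpose: "bil (A *v u) v = bil u (transpose A *v v)"
proof -
  have "bil (A *v u) v = (\<Sum>j\<in>UNIV. \<Sum>k\<in>UNIV. A $ j $ k * u $ k * v $ j)"
    by (simp add: bil_def matrix_vector_mult_def sum_distrib_right)
  also have "\<dots> = (\<Sum>k\<in>UNIV. \<Sum>j\<in>UNIV. A $ j $ k * u $ k * v $ j)" by (rule sum.swap)
  also have "\<dots> = bil u (transpose A *v v)"
    by (simp add: bil_def matrix_vector_mult_def transpose_def sum_distrib_left mult_ac del: transpose_matrix_vector)
  finally show ?thesis .
qed

lemma partD:
  fixes h :: "complex^'n^'n"
  assumes h: "h \<in> Ed d" and Kd: "real CARD('n) * real CARD('n) * d < 1/4" and d: "0 < d"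
  shows "h ** transpose h \<in> Mplus (8 * (real CARD('n) * real CARD('n)) * d)"
proof -
  define K where "K = real CARD('n) * real CARD('n)"
  have K0: "0 < K" by (simp add: K_def)
  have t: "transpose (h ** transpose h) = h ** transpose h" by (simp add: matrix_transpose_mul)
  have "bil ((h ** transpose h) *v cvec x) (cvec x) \<in> Nplus (8 * K * d)" if x: "x \<noteq> 0" for x
  proof -
    define w where "w = transpose h *v cvec x"
    have "bil ((h ** transpose h) *v cvec x) (cvec x) = bil w w"
      unfolding w_def by (simp add: matrix_vector_mul_assoc[symmetric] bil_transpose del: transpose_matrix_vector)
    moreover have "w \<in> Vd (2 * K * d)" unfolding w_def K_def
      using partB[OF h x _ d] Kd by simp
    moreover have "2 * K * d < 1/2" using Kd K_def by simp
    moreover have "0 < 2 * K * d" using K0 d by simp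
    ultimately have "bil ((h ** transpose h) *v cvec x) (cvec x) \<in> Nplus (4 * (2 * K * d))"
      using partC by metis
    then show ?thesis by (simp add: mult_ac)
  qed
  then show ?thesis using partA[OF t] unfolding K_def by blast
qed




theorem lemma6p1:
  shows "\<exists>C::real. \<exists>\<delta>0::real. C > 0 \<and> \<delta>0 > 0 \<and>
    (\<forall>\<delta>. 0 < \<delta> \<and> \<delta> < \<delta>0 \<longrightarrow>
      (\<forall>B::complex^'n^'n. transpose B = B \<longrightarrow>
          (B \<in> Mplus \<delta> \<longleftrightarrow> (\<forall>x::real^'n. x \<noteq> 0 \<longrightarrow> bil (B *v cvec x) (cvec x) \<in> Nplus \<delta>))) \<and>
      (\<forall>h::complex^'n^'n. \<forall>x::real^'n. h \<in> Ed \<delta> \<and> x \<noteq> 0 \<longrightarrow> transpose h *v cvec x \<in> Vd (C * \<delta>)) \<and>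
      (\<forall>z::complex^'n. z \<in> Vd \<delta> \<and> z \<noteq> 0 \<longrightarrow> bil z z \<in> Nplus (C * \<delta>)) \<and>
      (\<forall>h::complex^'n^'n. h \<in> Ed \<delta> \<longrightarrow> h ** transpose h \<in> Mplus (C * \<delta>)) \<and>
      (\<forall>A B::complex^'n^'n. A \<in> Md \<delta> \<and> opnorm (B - mat 1) < \<delta> \<longrightarrow>
          A ** B \<in> Md (C * \<delta>) \<and> B ** A \<in> Md (C * \<delta>)) \<and>
      (\<forall>(A::complex^'n^'n) (B::real^'n^'n). A \<in> Md \<delta> \<and> orthogonal_matrix B \<and> det B = 1 \<longrightarrow>
          A ** cmat B \<in> Md (C * \<delta>) \<and> cmat B ** A \<in> Md (C * \<delta>)))"
proof -
  define K where "K = real CARD('n) * real CARD('n)"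
  have "0 < CARD('n)" by simp
  then have c1: "1 \<le> real CARD('n)" by linarith
  have K1: "1 \<le> K" unfolding K_def using mult_mono[OF c1 c1] by simp
  show ?thesis
  proof (intro exI conjI allI impI)
    show "0 < 8 * K + 6" using K1 by simp
    show "0 < 1 / (4 * K)" using K1 by simp
    fix \<delta> :: real
    assume dd: "0 < \<delta> \<and> \<delta> < 1 / (4 * K)"
    then have d0: "0 < \<delta>" and Kd: "K * \<delta> < 1/4" using K1 by (auto simp: field_simps)
    have d4: "\<delta> < 1/4"
    proof -
      have "\<delta> \<le> K * \<delta>" using K1 d0 by simp
      then show ?thesis using Kd by linarith
    qed
    have Cd: "\<delta> \<le> (8 * K + 6) * \<delta>" "4 * \<delta> \<le> (8 * K + 6) * \<delta>" "6 * \<delta> \<le> (8 * K + 6) * \<delta>"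
      "2 * K * \<delta> \<le> (8 * K + 6) * \<delta>" "8 * K * \<delta> \<le> (8 * K + 6) * \<delta>"
      using K1 d0 by (simp_all add: algebra_simps)
    show "B \<in> Mplus \<delta> \<longleftrightarrow> (\<forall>x. x \<noteq> 0 \<longrightarrow> bil (B *v cvec x) (cvec x) \<in> Nplus \<delta>)"
      if "transpose B = B" for B :: "complex^'n^'n"
      using partA[OF that] .
    show "transpose h *v cvec x \<in> Vd ((8 * K + 6) * \<delta>)"
      if "h \<in> Ed \<delta> \<and> x \<noteq> 0" for h :: "complex^'n^'n" and x :: "real^'n"
    proof -
      have "transpose h *v cvec x \<in> Vd (2 * K * \<delta>)"
        using partB[of h \<delta> x] that Kd d0 unfolding K_def by simp
      then show ?thesis using Vd_mono Cd(4) by blast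
    qed
    show "bil z z \<in> Nplus ((8 * K + 6) * \<delta>)" if "z \<in> Vd \<delta> \<and> z \<noteq> 0" for z :: "complex^'n"
    proof -
      have "bil z z \<in> Nplus (4 * \<delta>)" using partC[of z \<delta>] that d4 d0 by simp
      then show ?thesis using Nplus_mono Cd(2) d0 by (metis mult_pos_pos zero_less_numeral)
    qed
    show "h ** transpose h \<in> Mplus ((8 * K + 6) * \<delta>)" if "h \<in> Ed \<delta>" for h :: "complex^'n^'n"
    proof -
      have "h ** transpose h \<in> Mplus (8 * K * \<delta>)"
        using partD[OF that] Kd d0 unfolding K_def by simp
      moreover have "0 < 8 * K * \<delta>" using K1 d0 by simp
      ultimately show ?thesis using Mplus_mono Cd(5) by blast
    qed
    show "A ** B \<in> Md ((8 * K + 6) * \<delta>)" "B ** A \<in> Md ((8 * K + 6) * \<delta>)"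
      if "A \<in> Md \<delta> \<and> opnorm (B - mat 1) < \<delta>" for A B :: "complex^'n^'n"
      using partE[of A \<delta> B] that d4 d0 Md_mono Cd(3) by blast+
    show "A ** cmat B \<in> Md ((8 * K + 6) * \<delta>)" "cmat B ** A \<in> Md ((8 * K + 6) * \<delta>)"
      if "A \<in> Md \<delta> \<and> orthogonal_matrix B \<and> det B = 1" for A :: "complex^'n^'n" and B :: "real^'n^'n"
      using partF[of A \<delta> B] that Md_mono Cd(1) by blast+
  qed
qed

end
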